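(* Let $f: \mathbb{T} \to \mathbb{T}$ be as in the context. Assume $\rho(f) = p/q$, with $p,q$ coprime positive integers, or $p=0$, $q=1$. If $q$ is even then $f^q=\mathrm{id}$, that is, all orbits are periodic with primitive period $q$; moreover, $a_0$ and $a_1$ are in the same periodic orbit. If $q$ is odd then, for any non-degenerate interval $I \subset \mathbb{T}$, $f^q|_I \ne \mathrm{id}|_I$; also $a_0$ and $a_1$ are not in the same periodic orbit.
   Context: Setting: the internal-wave billiard (unit-speed point particle, reflected so that angles of incident and reflected velocities with the vertical are equal) in a rectangular trapezoid of height $1/2$ with horizontal bases, vertical left leg, shorter base of length $\ell>0$, and slanted leg making angle $\alpha$ as in the paper's convention; the initial direction $\theta$ (angle with the vertical, particle starting on the vertical leg) satisfies $\alpha<\theta<\pi/2$ and $\theta\ge\arctan(2\ell+\tan\alpha)$. $f:\mathbb{T}\to\mathbb{T}$ ($\mathbb{T}=\mathbb{R}/\mathbb{Z}\cong[-1/2,1/2)$) is the first-return map of the unfolded linear flow to a horizontal cross-section of length 1; it is an orientation-preserving piecewise-linear circle homeomorphism whose derivative takes only the values $\Lambda$ and $\Lambda^{-1}$, $\Lambda=\sin(\theta+\alpha)/\sin(\theta-\alpha)>1$. Its two break points are $a_0=(\tan\theta-2\ell)/(2\tan\theta)\in(0,1/2)$ (where $f'$ jumps up from $\Lambda^{-1}$ to $\Lambda$) and $a_1=-(2\ell+\tan\alpha)/(2\tan\theta)\in(-1/2,0)$ (where $f'$ jumps down), with $f(a_j)=-a_j$. $\rho(f)\in[0,1)$ is the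 Poincaré rotation number. *)

theory Defs
  imports "HOL-Analysis.Analysis"
begin

text \<open>The circle T = R/Z is handled through lifts to R: a point of T is represented
by any real number, and two reals represent the same point iff their difference is
an integer.\<close>

definition iw_Lambda :: "real \<Rightarrow> real \<Rightarrow> real" where
  "iw_Lambda \<alpha> \<theta> = sin (\<theta> + \<alpha>) / sin (\<theta> - \<alpha>)"

definition iw_a0 :: "real \<Rightarrow> real \<Rightarrow> real" where
  "iw_a0 l \<theta> = (tan \<theta> - 2 * l) / (2 * tan \<theta>)"

definition iw_a1 :: "real \<Rightarrow> real \<Rightarrow> real \<Rightarrow> real" where
  "iw_a1 l \<alpha> \<theta> = - (2 * l + tan \<alpha>) / (2 * tan \<theta>)"

text \<open>On the arc [a1, a0] (through 0) f has slope 1/Lambda and f(a1) = -a1; on the arc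
[a0, a1+1] it has slope Lambda and f(a0) = -a0 (mod 1).\<close>

definition iw_lift :: "real \<Rightarrow> real \<Rightarrow> real \<Rightarrow> real \<Rightarrow> real" where
  "iw_lift l \<alpha> \<theta> x =
     (let a0 = iw_a0 l \<theta>; a1 = iw_a1 l \<alpha> \<theta>; \<Lambda> = iw_Lambda \<alpha> \<theta>;
          n = \<lfloor>x - a1\<rfloor>; y = x - of_int n
      in of_int n + (if y \<le> a0 then - a1 + (y - a1) / \<Lambda>
                     else 1 - a0 + \<Lambda> * (y - a0)))"

definition rot_number :: "(real \<Rightarrow> real) \<Rightarrow> real" where
  "rot_number F = frac (lim (\<lambda>n. (F ^^ n) 0 / real n))"

definition same_pt :: "real \<Rightarrow> real \<Rightarrow> bool" where
  "same_pt x y \<longleftrightarrow> x - y \<in> \<int>"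

end

theory Submission
  imports Defs
begin

locale iwm =
  fixes a0 a1 L :: real and F :: "real \<Rightarrow> real"
  assumes L1: "L > 1" and d0: "a1 < a0" and d1: "a0 < a1 + 1"
    and key: "a0 - a1 = L * (1 - (a0 - a1))"
    and Fdef: "\<And>x. F x = of_int \<lfloor>x - a1\<rfloor> + (if x - of_int \<lfloor>x - a1\<rfloor> \<le> a0
        then - a1 + (x - of_int \<lfloor>x - a1\<rfloor> - a1) / L
        else 1 - a0 + L * (x - of_int \<lfloor>x - a1\<rfloor> - a0))"
begin

lemma keyd: "(a0 - a1) / L = 1 - (a0 - a1)"
  using key L1 by (auto simp: field_simps)

lemma PA:
  assumes "a1 + of_int n \<le> y" "y \<le> a0 + of_int n"
  shows "F y = of_int n - a1 + (y - of_int n - a1) / L"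
proof -
  have "\<lfloor>y - a1\<rfloor> = n" using assms d1 by (intro floor_unique) auto
  then show ?thesis using assms by (simp add: Fdef)
qed

lemma PB:
  assumes "a0 + of_int n \<le> y" "y \<le> a1 + of_int n + 1"
  shows "F y = of_int n + 1 - a0 + L * (y - of_int n - a0)"
proof (cases "y = a1 + of_int n + 1")
  case True
  then have fl: "\<lfloor>y - a1\<rfloor> = n + 1" by simp
  have "F y = of_int n + 1 - a1" using True fl d0 by (simp add: Fdef)
  also have "\<dots> = of_int n + 1 - a0 + L * (y - of_int n - a0)"
    using True key by (simp add: algebra_simps)
  finally show ?thesis .
next
  case False
  then have fl: "\<lfloor>y - a1\<rfloor> = n" using assms d0 by (intro floor_unique) auto
  show ?thesis
  proof (cases "y = a0 + of_int n")
    case True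
    then show ?thesis using fl keyd by (simp add: Fdef algebra_simps)
  next
    case False
    then show ?thesis using fl assms by (simp add: Fdef)
  qed
qed

lemma cell: "a1 + of_int \<lfloor>x - a1\<rfloor> \<le> x" "x < a1 + of_int \<lfloor>x - a1\<rfloor> + 1"
  by linarith+

lemma F_shift: "F (x + of_int k) = F x + of_int k"
proof -
  have "\<lfloor>x + of_int k - a1\<rfloor> = \<lfloor>x - a1\<rfloor> + k"
    by (metis add.commute add_diff_eq floor_add_int)
  then show ?thesis by (simp add: Fdef)
qed

lemma F_a1: "F a1 = - a1" using PA[of 0 a1] d0 by simp
lemma F_a0: "F a0 = 1 - a0" using PA[of 0 a0] d0 keyd by (simp add: algebra_simps)

lemma divL_le: "0 \<le> t \<Longrightarrow> t / L \<le> t"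
proof -
  assume "0 \<le> t"
  then have "t / L \<le> t / 1" using L1 by (intro divide_left_mono) auto
  then show ?thesis by simp
qed

lemma le_mulL: "0 \<le> t \<Longrightarrow> t \<le> L * t"
  using mult_right_mono[of 1 L t] L1 by simp

lemma same_cell_bounds:
  assumes "a1 + of_int n \<le> x" "x \<le> y" "y \<le> a1 + of_int n + 1"
  shows "(y - x) / L \<le> F y - F x \<and> F y - F x \<le> L * (y - x)"
proof -
  have Lp: "L > 0" using L1 by simp
  have i1: "(y - x) / L \<le> y - x"
  proof -
    have "(y - x) / L \<le> (y - x) / 1" using L1 assms(2) by (intro divide_left_mono) auto
    then show ?thesis by simp
  qed
  have i2: "y - x \<le> L * (y - x)" using mult_right_mono[of 1 L "y - x"] L1 assms(2) by simp
  have A: "(u - w) / L \<le> F u - F w \<and> F u - F w \<le> L * (u - w)"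
    if "a1 + of_int n \<le> w" "w \<le> u" "u \<le> a0 + of_int n" for u w
  proof -
    have "F u - F w = (u - w) / L" using PA[of n u] PA[of n w] that by (simp add: diff_divide_distrib)
    moreover have "(u - w) / L \<le> L * (u - w)" using L1 that(2)
      using divL_le[of "u - w"] le_mulL[of "u - w"] by linarith
    ultimately show ?thesis by simp
  qed
  have B: "(u - w) / L \<le> F u - F w \<and> F u - F w \<le> L * (u - w)"
    if "a0 + of_int n \<le> w" "w \<le> u" "u \<le> a1 + of_int n + 1" for u w
  proof -
    have "F u - F w = L * (u - w)" using PB[of n u] PB[of n w] that by (simp add: algebra_simps)
    moreover have "(u - w) / L \<le> L * (u - w)" using L1 that(2)
      using divL_le[of "u - w"] le_mulL[of "u - w"] by linarith
    ultimately show ?thesis by simp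
  qed
  consider "y \<le> a0 + of_int n" | "a0 + of_int n \<le> x" | "x \<le> a0 + of_int n" "a0 + of_int n \<le> y" by linarith
  then show ?thesis
  proof cases
    case 1 then show ?thesis using A assms by auto
  next
    case 2 then show ?thesis using B assms by auto
  next
    case 3
    have a: "(a0 + of_int n - x) / L \<le> F (a0 + of_int n) - F x \<and> F (a0 + of_int n) - F x \<le> L * (a0 + of_int n - x)"
      using A 3 assms by auto
    have b: "(y - (a0 + of_int n)) / L \<le> F y - F (a0 + of_int n) \<and> F y - F (a0 + of_int n) \<le> L * (y - (a0 + of_int n))"
      using B 3 assms d0 by auto
    have "(y - x) / L = (a0 + of_int n - x) / L + (y - (a0 + of_int n)) / L" using L1 by (simp add: field_simps)
    moreover have "L * (y - x) = L * (a0 + of_int n - x) + L * (y - (a0 + of_int n))" by (simp add: algebra_simps)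
    ultimately show ?thesis using a b by linarith
  qed
qed

lemma F_bounds:
  assumes "x \<le> y"
  shows "(y - x) / L \<le> F y - F x \<and> F y - F x \<le> L * (y - x)"
proof -
  define n where "n = \<lfloor>x - a1\<rfloor>"
  define m where "m = \<lfloor>y - a1\<rfloor>"
  have nm: "n \<le> m" using assms unfolding n_def m_def by (intro floor_mono) simp
  have xc: "a1 + of_int n \<le> x" "x < a1 + of_int n + 1" unfolding n_def by linarith+
  have yc: "a1 + of_int m \<le> y" "y < a1 + of_int m + 1" unfolding m_def by linarith+
  show ?thesis
  proof (cases "n = m")
    case True then show ?thesis using same_cell_bounds[of n x y] xc yc assms by simp
  next
    case False
    then have nm': "n + 1 \<le> m" using nm by simp
    have Fk: "F (a1 + of_int k) = of_int k - a1" for k using PA[of k "a1 + of_int k"] d0 by simp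
    have a: "(a1 + of_int n + 1 - x) / L \<le> F (a1 + of_int n + 1) - F x \<and> F (a1 + of_int n + 1) - F x \<le> L * (a1 + of_int n + 1 - x)"
      using same_cell_bounds[of n x "a1 + of_int n + 1"] xc by simp
    have c: "(y - (a1 + of_int m)) / L \<le> F y - F (a1 + of_int m) \<and> F y - F (a1 + of_int m) \<le> L * (y - (a1 + of_int m))"
      using same_cell_bounds[of m "a1 + of_int m" y] yc by simp
    have e1: "F (a1 + of_int n + 1) = of_int n + 1 - a1" using Fk[of "n+1"] by (simp add: add.assoc)
    have e2: "F (a1 + of_int m) = of_int m - a1" using Fk by simp
    define g where "g = real_of_int m - of_int n - 1"
    have g0: "g \<ge> 0" using nm' unfolding g_def by simp
    have b1: "g / L \<le> g"
    proof -
      have "g / L \<le> g / 1" using L1 g0 by (intro divide_left_mono) auto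
      then show ?thesis by simp
    qed
    have b2: "g \<le> L * g" using mult_right_mono[of 1 L g] L1 g0 by simp
    have "F y - F x = (F y - F (a1 + of_int m)) + g + (F (a1 + of_int n + 1) - F x)"
      using e1 e2 unfolding g_def by simp
    moreover have "(y - x) / L = (y - (a1 + of_int m)) / L + g / L + (a1 + of_int n + 1 - x) / L"
      unfolding g_def using L1 by (simp add: field_simps)
    moreover have "L * (y - x) = L * (y - (a1 + of_int m)) + L * g + L * (a1 + of_int n + 1 - x)"
      unfolding g_def by (simp add: algebra_simps)
    ultimately show ?thesis using a c b1 b2 by linarith
  qed
qed

lemma F_strict: "x < y \<Longrightarrow> F x < F y"
  proof -
  assume "x < y"
  then have "0 < (y - x) / L" using L1 by simp
  then show ?thesis using F_bounds[of x y] \<open>x < y\<close> by linarith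
qed

lemma F_mono: "x \<le> y \<Longrightarrow> F x \<le> F y"
  using F_strict[of x y] by (cases "x < y") auto

lemma F_inj: "F x = F y \<Longrightarrow> x = y"
  using F_strict by (metis linorder_neqE_linordered_idom order_less_irrefl)

lemma F_lip: "dist (F x) (F y) \<le> L * dist x y"
proof (cases "x \<le> y")
  case True
  have h: "0 \<le> (y - x) / L" "0 \<le> L * (y - x)" using True L1 by simp_all
  have "\<bar>F x - F y\<bar> = F y - F x" using F_bounds[of x y] True h by linarith
  moreover have "\<bar>x - y\<bar> = y - x" using True by simp
  ultimately show ?thesis using F_bounds[of x y] True by (simp add: dist_real_def)
next
  case False
  have h: "0 \<le> (x - y) / L" "0 \<le> L * (x - y)" using False L1 by simp_all
  have "\<bar>F x - F y\<bar> = F x - F y" using F_bounds[of y x] False h by linarith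
  moreover have "\<bar>x - y\<bar> = x - y" using False by simp
  ultimately show ?thesis using F_bounds[of y x] False by (simp add: dist_real_def)
qed

lemma F_cont: "continuous_on S F"
proof -
  have "L-lipschitz_on S F" using L1 F_lip by (intro lipschitz_onI) auto
  then show ?thesis by (rule lipschitz_on_continuous_on)
qed


lemma Fn_shift: "(F^^n) (x + of_int k) = (F^^n) x + of_int k"
  by (induction n) (simp_all add: F_shift)

lemma Fn_strict: "x < y \<Longrightarrow> (F^^n) x < (F^^n) y"
  by (induction n) (simp_all add: F_strict)

lemma Fn_mono: "x \<le> y \<Longrightarrow> (F^^n) x \<le> (F^^n) y"
  by (induction n) (simp_all add: F_mono)

lemma Fn_inj: "(F^^n) x = (F^^n) y \<Longrightarrow> x = y"
  by (metis Fn_strict linorder_neqE_linordered_idom order_less_irrefl)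

lemma Fn_strict_iff: "(F^^n) x < (F^^n) y \<longleftrightarrow> x < y"
  by (metis Fn_strict Fn_inj linorder_neqE_linordered_idom order_less_asym)

lemma Fn_le_iff: "(F^^n) x \<le> (F^^n) y \<longleftrightarrow> x \<le> y"
  by (meson Fn_strict_iff not_le)

lemma Fn_cont: "continuous_on S (F^^n)"
proof (induction n arbitrary: S)
  case 0 then show ?case by (simp add: continuous_on_id)
next
  case (Suc n)
  have "continuous_on S (\<lambda>x. (F^^n) (F x))"
    by (rule continuous_on_compose2[OF Suc.IH[of UNIV] F_cont]) auto
  then show ?case by (simp del: funpow.simps add: funpow_Suc_right o_def)
qed

lemma F_refl: "F (- F x) = - x"
proof -
  define n where "n = \<lfloor>x - a1\<rfloor>"
  have xc: "a1 + of_int n \<le> x" "x < a1 + of_int n + 1" unfolding n_def by linarith+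
  have Lp: "L > 0" using L1 by simp
  have kk: "L * (1 - (a0 - a1)) = a0 - a1" using key by simp
  show ?thesis
  proof (cases "x \<le> a0 + of_int n")
    case True
    have Fx: "F x = of_int n - a1 + (x - of_int n - a1) / L" using PA[of n x] xc True by simp
    have t0: "0 \<le> (x - of_int n - a1) / L" using xc Lp by simp
    have t1: "(x - of_int n - a1) / L \<le> (a0 - a1) / L" using True Lp by (intro divide_right_mono) auto
    have r: "a0 + of_int (- n - 1) \<le> - F x" "- F x \<le> a1 + of_int (- n - 1) + 1"
      using Fx t0 t1 keyd by simp_all
    have "F (- F x) = of_int (- n - 1) + 1 - a0 + L * (- F x - of_int (- n - 1) - a0)"
      using PB[OF r] .
    also have "\<dots> = - of_int n - a0 + L * ((1 - (a0 - a1)) - (x - of_int n - a1) / L)"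
    proof -
      have "- F x - of_int (- n - 1) - a0 = (1 - (a0 - a1)) - (x - of_int n - a1) / L" using Fx by simp
      then show ?thesis by simp
    qed
    also have "\<dots> = - of_int n - a0 + L * (1 - (a0 - a1)) - (x - of_int n - a1)"
    proof -
      have "L * (A - t / L) = L * A - t" for A t using Lp by (simp add: field_simps)
      then show ?thesis by simp
    qed
    also have "\<dots> = - x" using kk by simp
    finally show ?thesis .
  next
    case False
    have Fx: "F x = of_int n + 1 - a0 + L * (x - of_int n - a0)" using PB[of n x] xc False by simp
    have t0: "0 \<le> L * (x - of_int n - a0)" using False Lp by simp
    have t1: "L * (x - of_int n - a0) \<le> L * (1 - (a0 - a1))" using xc Lp by (intro mult_left_mono) auto
    have r: "a1 + of_int (- n - 1) \<le> - F x" "- F x \<le> a0 + of_int (- n - 1)"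
      using Fx t0 t1 kk by simp_all
    have "F (- F x) = of_int (- n - 1) - a1 + (- F x - of_int (- n - 1) - a1) / L"
      using PA[OF r] .
    also have "\<dots> = - of_int n - 1 - a1 + ((a0 - a1) - L * (x - of_int n - a0)) / L"
      using Fx by (simp add: algebra_simps)
    also have "\<dots> = - of_int n - 1 - a1 + (a0 - a1) / L - (x - of_int n - a0)"
      using Lp by (simp add: diff_divide_distrib)
    also have "\<dots> = - x" using keyd by simp
    finally show ?thesis .
  qed
qed

lemma Fn_refl: "(F^^n) (- (F^^n) x) = - x"
proof (induction n arbitrary: x)
  case 0 then show ?case by simp
next
  case (Suc n)
  have a: "(F^^Suc n) x = F ((F^^n) x)" by simp
  have b: "(F^^Suc n) z = (F^^n) (F z)" for z by (simp add: funpow_Suc_right del: funpow.simps)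
  have "(F^^Suc n) (- (F^^Suc n) x) = (F^^Suc n) (- F ((F^^n) x))" by (simp only: a)
  also have "\<dots> = (F^^n) (F (- F ((F^^n) x)))" by (rule b)
  also have "\<dots> = - x" using F_refl Suc by simp
  finally show ?case .
qed

definition sg :: "real \<Rightarrow> int" where
  "sg x = (if x - of_int \<lfloor>x - a1\<rfloor> < a0 then -1 else 1)"

definition Exs :: "nat \<Rightarrow> real \<Rightarrow> int" where
  "Exs n x = (\<Sum>i<n. sg ((F^^i) x))"

lemma sg_shift: "sg (x + of_int k) = sg x"
proof -
  have "\<lfloor>x + of_int k - a1\<rfloor> = \<lfloor>x - a1\<rfloor> + k"
    by (metis add.commute add_diff_eq floor_add_int)
  then show ?thesis by (simp add: sg_def)
qed

lemma RA1: "\<exists>\<delta>>0. \<forall>y. x \<le> y \<and> y \<le> x + \<delta> \<longrightarrow> F y - F x = L powr (of_int (sg x)) * (y - x)"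
proof -
  define n where "n = \<lfloor>x - a1\<rfloor>"
  have xc: "a1 + of_int n \<le> x" "x < a1 + of_int n + 1" unfolding n_def by linarith+
  have Lp: "L > 0" using L1 by simp
  show ?thesis
  proof (cases "x - of_int n < a0")
    case True
    then have s: "sg x = -1" unfolding sg_def n_def by simp
    have pm: "L powr (-1) = 1 / L" using Lp by (simp add: powr_minus_divide)
    show ?thesis
    proof (intro exI[of _ "a0 + of_int n - x"] conjI allI impI)
      show "0 < a0 + of_int n - x" using True by simp
      fix y assume y: "x \<le> y \<and> y \<le> x + (a0 + of_int n - x)"
      have "F y - F x = (y - x) / L" using PA[of n y] PA[of n x] xc y True
        by (simp add: diff_divide_distrib)
      then show "F y - F x = L powr (of_int (sg x)) * (y - x)" using s pm by simp
    qed
  next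
    case False
    then have s: "sg x = 1" unfolding sg_def n_def by simp
    show ?thesis
    proof (intro exI[of _ "a1 + of_int n + 1 - x"] conjI allI impI)
      show "0 < a1 + of_int n + 1 - x" using xc by simp
      fix y assume y: "x \<le> y \<and> y \<le> x + (a1 + of_int n + 1 - x)"
      have "F y - F x = L * (y - x)" using PB[of n y] PB[of n x] xc y False
        by (simp add: algebra_simps)
      then show "F y - F x = L powr (of_int (sg x)) * (y - x)" using s Lp by simp
    qed
  qed
qed

lemma Exs_Suc: "Exs (Suc n) x = Exs n x + sg ((F^^n) x)"
  unfolding Exs_def by simp

lemma RA: "\<exists>\<delta>>0. \<forall>y. x \<le> y \<and> y \<le> x + \<delta> \<longrightarrow>
    (F^^n) y - (F^^n) x = L powr (of_int (Exs n x)) * (y - x)"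
proof (induction n)
  case 0
  have "L powr 0 = 1" using L1 by simp
  then show ?case unfolding Exs_def by (intro exI[of _ 1]) simp
next
  case (Suc n)
  obtain d1 where d1: "d1 > 0" "\<forall>y. x \<le> y \<and> y \<le> x + d1 \<longrightarrow>
      (F^^n) y - (F^^n) x = L powr (of_int (Exs n x)) * (y - x)" using Suc by blast
  obtain d2 where d2: "d2 > 0" "\<forall>z. (F^^n) x \<le> z \<and> z \<le> (F^^n) x + d2 \<longrightarrow>
      F z - F ((F^^n) x) = L powr (of_int (sg ((F^^n) x))) * (z - (F^^n) x)"
    using RA1[of "(F^^n) x"] by blast
  define c where "c = L powr (of_int (Exs n x))"
  have cp: "c > 0" unfolding c_def using L1 by simp
  show ?case
  proof (intro exI[of _ "min d1 (d2 / c)"] conjI allI impI)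
    show "0 < min d1 (d2 / c)" using d1 d2 cp by simp
    fix y assume y: "x \<le> y \<and> y \<le> x + min d1 (d2 / c)"
    have e1: "(F^^n) y = (F^^n) x + c * (y - x)" using d1(2) y unfolding c_def by force
    have "c * (y - x) \<le> c * (d2 / c)" using y cp by (intro mult_left_mono) auto
    then have "c * (y - x) \<le> d2" using cp by simp
    moreover have "0 \<le> c * (y - x)" using y cp by simp
    ultimately have e2: "F ((F^^n) y) - F ((F^^n) x) = L powr (of_int (sg ((F^^n) x))) * (c * (y - x))"
      using d2(2) e1 by simp
    have "L powr (of_int (sg ((F^^n) x))) * (c * (y - x)) = L powr (of_int (Exs (Suc n) x)) * (y - x)"
      unfolding c_def Exs_Suc by (simp add: powr_add)
    then show "(F^^Suc n) y - (F^^Suc n) x = L powr (of_int (Exs (Suc n) x)) * (y - x)"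
      using e2 by simp
  qed
qed

lemma Exs_parity: "even (Exs n x + int n)"
proof (induction n)
  case 0 then show ?case by (simp add: Exs_def)
next
  case (Suc n)
  have "sg ((F^^n) x) = -1 \<or> sg ((F^^n) x) = 1" unfolding sg_def by simp
  then show ?case using Suc unfolding Exs_Suc by auto
qed

lemma odd_a:
  assumes "odd q" "a < b"
  shows "\<exists>x\<in>{a..b}. (F^^q) x - x \<notin> \<int>"
proof (rule ccontr)
  assume H: "\<not> ?thesis"
  obtain d where d: "d > 0" "\<forall>y. a \<le> y \<and> y \<le> a + d \<longrightarrow>
      (F^^q) y - (F^^q) a = L powr (of_int (Exs q a)) * (y - a)" using RA by blast
  have "odd (Exs q a)" using Exs_parity[of q a] assms(1) by auto
  then have E0: "Exs q a \<noteq> 0" by auto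
  define c where "c = L powr (of_int (Exs q a))"
  have c1: "c \<noteq> 1" unfolding c_def using L1 E0 by simp
  define t where "t = min (min d (b - a)) (1 / (2 * \<bar>c - 1\<bar>))"
  have tp: "t > 0" unfolding t_def using d assms c1 by simp
  have tb: "t \<le> b - a" "t \<le> d" unfolding t_def by simp_all
  have tc: "\<bar>c - 1\<bar> * t \<le> 1/2"
  proof -
    have "t \<le> 1 / (2 * \<bar>c - 1\<bar>)" unfolding t_def by simp
    then have "\<bar>c - 1\<bar> * t \<le> \<bar>c - 1\<bar> * (1 / (2 * \<bar>c - 1\<bar>))" by (intro mult_left_mono) auto
    also have "\<dots> = 1/2" using c1 by simp
    finally show ?thesis .
  qed
  define y where "y = a + t"
  have yab: "y \<in> {a..b}" unfolding y_def using tp tb by simp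
  have a_in: "a \<in> {a..b}" using assms by simp
  have eq: "((F^^q) y - y) - ((F^^q) a - a) = (c - 1) * t"
    using d(2)[rule_format, of y] tp tb unfolding y_def c_def by (simp add: algebra_simps)
  have i1: "(F^^q) y - y \<in> \<int>" using H yab by blast
  have i2: "(F^^q) a - a \<in> \<int>" using H a_in by blast
  have "(c - 1) * t \<in> \<int>" using Ints_diff[OF i1 i2] eq by simp
  moreover have "(c - 1) * t \<noteq> 0" using c1 tp by simp
  ultimately have "1 \<le> \<bar>(c - 1) * t\<bar>" by (rule Ints_nonzero_abs_ge1)
  moreover have "\<bar>(c - 1) * t\<bar> = \<bar>c - 1\<bar> * t" using tp by (simp add: abs_mult)
  ultimately show False using tc by simp
qed


lemma Dbound_le:
  assumes "y \<le> x"
  shows "\<bar>((F^^n) x - x) - ((F^^n) y - y)\<bar> \<le> 1"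
proof -
  define k where "k = \<lfloor>x - y\<rfloor>"
  have k: "y + of_int k \<le> x" "x < y + of_int k + 1" unfolding k_def by linarith+
  have m1: "(F^^n) (y + of_int k) \<le> (F^^n) x" using Fn_mono k(1) by blast
  have m2: "(F^^n) x \<le> (F^^n) (y + of_int (k + 1))" using Fn_mono k(2) by simp
  have "(F^^n) (y + of_int k) = (F^^n) y + of_int k" by (rule Fn_shift)
  moreover have "(F^^n) (y + of_int (k+1)) = (F^^n) y + of_int k + 1" using Fn_shift[of n y "k+1"] by simp
  ultimately show ?thesis using m1 m2 k by (simp add: abs_le_iff)
qed

lemma Dbound: "\<bar>((F^^n) x - x) - ((F^^n) y - y)\<bar> \<le> 1"
proof (cases "y \<le> x")
  case True then show ?thesis by (rule Dbound_le)
next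
  case False
  then have "\<bar>((F^^n) y - y) - ((F^^n) x - x)\<bar> \<le> 1" by (intro Dbound_le) simp
  then show ?thesis by (simp add: abs_minus_commute)
qed

lemma mult_bound: "\<bar>(F^^(m*k)) 0 - real k * (F^^m) 0\<bar> \<le> real k"
proof (induction k)
  case 0 then show ?case by simp
next
  case (Suc k)
  have e: "(F^^(m * Suc k)) 0 = (F^^m) ((F^^(m*k)) 0)"
    by (simp only: mult_Suc_right funpow_add o_apply)
  have "\<bar>((F^^m) ((F^^(m*k)) 0) - (F^^(m*k)) 0) - ((F^^m) 0 - 0)\<bar> \<le> 1" by (rule Dbound)
  then show ?case using Suc e by (simp add: abs_le_iff algebra_simps)
qed

lemma div_bound:
  assumes "\<bar>X - real n * a\<bar> \<le> real n" "m > 0" "n > 0"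
  shows "\<bar>X / (real m * real n) - a / real m\<bar> \<le> 1 / real m"
proof -
  have pos: "0 < real m * real n" using assms(2,3) by simp
  have eq: "X / (real m * real n) - a / real m = (X - real n * a) / (real m * real n)"
    using assms(2,3) by (simp add: field_simps)
  have "\<bar>X / (real m * real n) - a / real m\<bar> = \<bar>X - real n * a\<bar> / (real m * real n)"
    unfolding eq abs_divide using pos by simp
  also have "\<dots> \<le> real n / (real m * real n)"
    using assms(1) by (rule divide_right_mono) (use pos in linarith)
  also have "\<dots> = 1 / real m" using assms(2,3) by simp
  finally show ?thesis .
qed

lemma cauchy_bound:
  assumes "m > 0" "n > 0"
  shows "\<bar>(F^^m) 0 / real m - (F^^n) 0 / real n\<bar> \<le> 1 / real m + 1 / real n"
proof -
  have b1: "\<bar>(F^^(m*n)) 0 / (real m * real n) - (F^^m) 0 / real m\<bar> \<le> 1 / real m"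
    using div_bound[OF mult_bound[of m n] assms] .
  have b2: "\<bar>(F^^(n*m)) 0 / (real n * real m) - (F^^n) 0 / real n\<bar> \<le> 1 / real n"
    using div_bound[OF mult_bound[of n m] assms(2,1)] .
  have "(F^^(n*m)) 0 / (real n * real m) = (F^^(m*n)) 0 / (real m * real n)"
    by (simp add: mult.commute)
  then show ?thesis using b1 b2 by linarith
qed

definition rho :: real where "rho = lim (\<lambda>n. (F^^n) 0 / real n)"

lemma rho_conv: "(\<lambda>n. (F^^n) 0 / real n) \<longlonglongrightarrow> rho"
proof -
  have "Cauchy (\<lambda>n. (F^^n) 0 / real n)"
  proof (rule CauchyI)
    fix e :: real assume e: "0 < e"
    define M where "M = nat \<lceil>3 / e\<rceil> + 1"
    have M0: "M > 0" unfolding M_def by simp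
    have M3: "3 / e \<le> real M" unfolding M_def by linarith
    have M2: "2 / real M < e"
    proof -
      have "0 < real M" using M0 by simp
      then have "2 / real M \<le> 2 / (3 / e)" using e M3 by (intro divide_left_mono) auto
      also have "\<dots> = 2 * e / 3" by simp
      also have "\<dots> < e" using e by simp
      finally show ?thesis .
    qed
    show "\<exists>M. \<forall>m\<ge>M. \<forall>n\<ge>M. norm ((F^^m) 0 / real m - (F^^n) 0 / real n) < e"
    proof (intro exI[of _ M] allI impI)
      fix m n assume mn: "M \<le> m" "M \<le> n"
      then have p: "m > 0" "n > 0" using M0 by auto
      have "1 / real m \<le> 1 / real M" using mn M0 by (intro divide_left_mono) auto
      moreover have "1 / real n \<le> 1 / real M" using mn M0 by (intro divide_left_mono) auto
      ultimately have "1 / real m + 1 / real n \<le> 2 / real M" by simp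
      then show "norm ((F^^m) 0 / real m - (F^^n) 0 / real n) < e"
        using cauchy_bound[OF p] M2 by simp
    qed
  qed
  then show ?thesis unfolding rho_def by (simp add: Cauchy_convergent_iff convergent_LIMSEQ_iff)
qed

lemma rho_bound:
  assumes "m > 0"
  shows "\<bar>(F^^m) 0 / real m - rho\<bar> \<le> 1 / real m"
proof -
  have t1: "(\<lambda>n. \<bar>(F^^m) 0 / real m - (F^^n) 0 / real n\<bar>) \<longlonglongrightarrow> \<bar>(F^^m) 0 / real m - rho\<bar>"
    by (intro tendsto_intros rho_conv)
  have t2: "(\<lambda>n. 1 / real m + 1 / real n) \<longlonglongrightarrow> 1 / real m + 0"
    by (intro tendsto_intros lim_inverse_n')
  have ev: "\<exists>N. \<forall>n\<ge>N. \<bar>(F^^m) 0 / real m - (F^^n) 0 / real n\<bar> \<le> 1 / real m + 1 / real n"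
    using cauchy_bound assms by (intro exI[of _ 1]) auto
  show ?thesis using LIMSEQ_le[OF t1 t2 ev] by simp
qed

lemma small_forall_zero:
  assumes "\<And>t::nat. t > 0 \<Longrightarrow> \<bar>z\<bar> \<le> C / real t" "C \<ge> 0"
  shows "z = 0"
proof (rule ccontr)
  assume z: "z \<noteq> 0"
  define t where "t = nat \<lceil>2 * C / \<bar>z\<bar>\<rceil> + 1"
  have t0: "t > 0" unfolding t_def by simp
  have tb: "2 * C / \<bar>z\<bar> \<le> real t" unfolding t_def by linarith
  have "\<bar>z\<bar> \<le> C / real t" using assms(1) t0 .
  then have "\<bar>z\<bar> * real t \<le> C" using t0 by (simp add: field_simps)
  moreover have "2 * C \<le> \<bar>z\<bar> * real t" using tb z by (simp add: field_simps)
  ultimately have "C \<le> 0" by simp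
  then have "C = 0" using assms(2) by simp
  then have "\<bar>z\<bar> \<le> 0" using assms(1)[of 1] by simp
  then show False using z by simp
qed

lemma Fn_iter_per:
  assumes "(F^^N) x = x + of_int c"
  shows "(F^^(N*t)) x = x + of_int (int t * c)"
proof (induction t)
  case 0 then show ?case by simp
next
  case (Suc t)
  have "(F^^(N * Suc t)) x = (F^^N) ((F^^(N*t)) x)"
    by (simp only: mult_Suc_right funpow_add o_apply)
  also have "\<dots> = (F^^N) x + of_int (int t * c)" using Suc Fn_shift[of N x "int t * c"] by simp
  finally show ?case using assms by (simp add: algebra_simps)
qed


lemma rho_per:
  assumes N: "N > 0" and per: "(F^^N) x = x + of_int c"
  shows "rho = of_int c / real N"
proof -
  have "\<bar>rho - of_int c / real N\<bar> \<le> 2 / real t" if t: "t > 0" for t :: nat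
  proof -
    have pos: "0 < real N * real t" using N t by simp
    have it: "(F^^(N*t)) x = x + of_int (int t * c)" by (rule Fn_iter_per[OF per])
    have "\<bar>((F^^(N*t)) 0 - 0) - ((F^^(N*t)) x - x)\<bar> \<le> 1" by (rule Dbound)
    then have b1: "\<bar>(F^^(N*t)) 0 - real t * of_int c\<bar> \<le> 1" using it by simp
    have b2: "\<bar>(F^^(N*t)) 0 / (real N * real t) - rho\<bar> \<le> 1 / (real N * real t)"
      using rho_bound[of "N*t"] N t by simp
    have eq: "(F^^(N*t)) 0 / (real N * real t) - of_int c / real N
        = ((F^^(N*t)) 0 - real t * of_int c) / (real N * real t)"
      using N t by (simp add: field_simps)
    have b3: "\<bar>(F^^(N*t)) 0 / (real N * real t) - of_int c / real N\<bar> \<le> 1 / (real N * real t)"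
      unfolding eq abs_divide using pos b1 by (simp add: divide_right_mono)
    have "\<bar>rho - of_int c / real N\<bar> \<le> 2 / (real N * real t)" using b2 b3 by linarith
    also have "\<dots> \<le> 2 / real t"
      using N t by (intro divide_left_mono) auto
    finally show ?thesis .
  qed
  then have "rho - of_int c / real N = 0" by (intro small_forall_zero[of _ 2]) auto
  then show ?thesis by simp
qed

definition phi :: "nat \<Rightarrow> int \<Rightarrow> real \<Rightarrow> real" where
  "phi q P x = (F^^q) x - x - of_int P"

lemma phi_cont: "continuous_on S (phi q P)"
  unfolding phi_def by (intro continuous_intros Fn_cont)

lemma phi_shift: "phi q P (x + of_int k) = phi q P x"
  unfolding phi_def by (simp add: Fn_shift)

lemma phi_red: "phi q P x = phi q P (x - of_int \<lfloor>x\<rfloor>)"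
  using phi_shift[of q P "x - of_int \<lfloor>x\<rfloor>" "\<lfloor>x\<rfloor>"] by simp

lemma frac_in: "x - of_int \<lfloor>x\<rfloor> \<in> {0..1}"
  by (simp add: frac_lt_1 less_imp_le) linarith

lemma iter_lower:
  assumes "\<And>x. m0 \<le> phi q P x"
  shows "real t * (of_int P + m0) \<le> (F^^(q*t)) 0"
proof (induction t)
  case 0 then show ?case by simp
next
  case (Suc t)
  have "(F^^(q * Suc t)) 0 = (F^^q) ((F^^(q*t)) 0)"
    by (simp only: mult_Suc_right funpow_add o_apply)
  moreover have "(F^^q) ((F^^(q*t)) 0) \<ge> (F^^(q*t)) 0 + of_int P + m0"
    using assms[of "(F^^(q*t)) 0"] unfolding phi_def by simp
  ultimately show ?case using Suc by (simp add: algebra_simps)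
qed

lemma iter_upper:
  assumes "\<And>x. phi q P x \<le> M0"
  shows "(F^^(q*t)) 0 \<le> real t * (of_int P + M0)"
proof (induction t)
  case 0 then show ?case by simp
next
  case (Suc t)
  have "(F^^(q * Suc t)) 0 = (F^^q) ((F^^(q*t)) 0)"
    by (simp only: mult_Suc_right funpow_add o_apply)
  moreover have "(F^^q) ((F^^(q*t)) 0) \<le> (F^^(q*t)) 0 + of_int P + M0"
    using assms[of "(F^^(q*t)) 0"] unfolding phi_def by simp
  ultimately show ?case using Suc by (simp add: algebra_simps)
qed

lemma per_exists:
  assumes q: "q > 0" and r: "rho = of_int P / real q"
  shows "\<exists>x. (F^^q) x = x + of_int P"
proof -
  have ex_le: "\<exists>x. phi q P x \<le> 0"
  proof (rule ccontr)
    assume "\<not> ?thesis"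
    then have gt: "\<And>x. phi q P x > 0" by (simp add: not_le)
    obtain x0 where x0: "x0 \<in> {0..1}" "\<forall>y\<in>{0..1}. phi q P x0 \<le> phi q P y"
      using continuous_attains_inf[of "{0..1::real}" "phi q P"] phi_cont by auto
    define m0 where "m0 = phi q P x0"
    have m0p: "m0 > 0" unfolding m0_def using gt by simp
    have mle: "m0 \<le> phi q P x" for x
      using x0(2) frac_in[of x] phi_red[of q P x] unfolding m0_def by auto
    have "\<bar>m0\<bar> \<le> 1 / real t" if t: "t > 0" for t :: nat
    proof -
      have pos: "0 < real q * real t" using q t by simp
      have lo: "real t * (of_int P + m0) \<le> (F^^(q*t)) 0" by (rule iter_lower[OF mle])
      have b: "\<bar>(F^^(q*t)) 0 / (real q * real t) - rho\<bar> \<le> 1 / (real q * real t)"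
        using rho_bound[of "q*t"] q t by simp
      have "real t * (of_int P + m0) / (real q * real t) \<le> (F^^(q*t)) 0 / (real q * real t)"
        using lo by (rule divide_right_mono) (use pos in linarith)
      moreover have "real t * (of_int P + m0) / (real q * real t) = (of_int P + m0) / real q"
        using t by simp
      ultimately have "(of_int P + m0) / real q - 1 / (real q * real t) \<le> rho" using b by linarith
      then have "(of_int P + m0) / real q - 1 / (real q * real t) \<le> of_int P / real q" using r by simp
      then have "m0 / real q \<le> 1 / (real q * real t)" by (simp add: add_divide_distrib)
      then have "m0 \<le> 1 / real t" using q t by (simp add: field_simps)
      then show ?thesis using m0p by simp
    qed
    then have "m0 = 0" by (intro small_forall_zero[of _ 1]) auto
    then show False using m0p by simp
  qed
  have ex_ge: "\<exists>x. phi q P x \<ge> 0"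
  proof (rule ccontr)
    assume "\<not> ?thesis"
    then have lt: "\<And>x. phi q P x < 0" by (simp add: not_le)
    obtain x0 where x0: "x0 \<in> {0..1}" "\<forall>y\<in>{0..1}. phi q P y \<le> phi q P x0"
      using continuous_attains_sup[of "{0..1::real}" "phi q P"] phi_cont by auto
    define M0 where "M0 = phi q P x0"
    have M0n: "M0 < 0" unfolding M0_def using lt by simp
    have mle: "phi q P x \<le> M0" for x
      using x0(2) frac_in[of x] phi_red[of q P x] unfolding M0_def by auto
    have "\<bar>M0\<bar> \<le> 1 / real t" if t: "t > 0" for t :: nat
    proof -
      have pos: "0 < real q * real t" using q t by simp
      have up: "(F^^(q*t)) 0 \<le> real t * (of_int P + M0)" by (rule iter_upper[OF mle])
      have b: "\<bar>(F^^(q*t)) 0 / (real q * real t) - rho\<bar> \<le> 1 / (real q * real t)"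
        using rho_bound[of "q*t"] q t by simp
      have "(F^^(q*t)) 0 / (real q * real t) \<le> real t * (of_int P + M0) / (real q * real t)"
        using up by (rule divide_right_mono) (use pos in linarith)
      moreover have "real t * (of_int P + M0) / (real q * real t) = (of_int P + M0) / real q"
        using t by simp
      ultimately have "rho \<le> (of_int P + M0) / real q + 1 / (real q * real t)" using b by linarith
      then have "of_int P / real q \<le> (of_int P + M0) / real q + 1 / (real q * real t)" using r by simp
      then have "- M0 / real q \<le> 1 / (real q * real t)" by (simp add: add_divide_distrib)
      then have "- M0 \<le> 1 / real t" using q t by (simp add: field_simps)
      then show ?thesis using M0n by simp
    qed
    then have "M0 = 0" by (intro small_forall_zero[of _ 1]) auto
    then show False using M0n by simp
  qed
  obtain x1 where x1: "phi q P x1 \<le> 0" using ex_le by blast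
  obtain x2 where x2: "phi q P x2 \<ge> 0" using ex_ge by blast
  have "\<exists>x. phi q P x = 0"
  proof (cases "x1 \<le> x2")
    case True
    then show ?thesis using IVT'[of "phi q P" x1 0 x2] x1 x2 phi_cont by blast
  next
    case False
    then show ?thesis using IVT2'[of "phi q P" x1 0 x2] x1 x2 phi_cont by force
  qed
  then show ?thesis unfolding phi_def by (auto simp: algebra_simps)
qed


lemma kappa_strict: "x < y \<Longrightarrow> - F y - y < - F x - x"
  using F_strict[of x y] by simp

lemma kappa_inj: "- F x - x = - F y - y \<Longrightarrow> x = y"
  by (metis kappa_strict linorder_neqE_linordered_idom order_less_irrefl)

lemma kappa_a1: "- F (a1 + of_int k) - (a1 + of_int k) = - 2 * of_int k"
  using F_shift[of a1 k] F_a1 by simp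

lemma kappa_a0: "- F (a0 + of_int k) - (a0 + of_int k) = - 1 - 2 * of_int k"
  using F_shift[of a0 k] F_a0 by simp

lemma HH: "- F (- F x) = x"
  using F_refl by simp

lemma Fn_swap: "(F^^q) ((F^^k) z) = (F^^k) ((F^^q) z)"
proof -
  have "(F^^q) ((F^^k) z) = (F^^(q+k)) z" by (simp only: funpow_add o_apply)
  also have "\<dots> = (F^^(k+q)) z" by (simp only: add.commute)
  also have "\<dots> = (F^^k) ((F^^q) z)" by (simp only: funpow_add o_apply)
  finally show ?thesis .
qed

lemma sg_neg: "a1 + of_int k \<le> z \<Longrightarrow> z < a0 + of_int k \<Longrightarrow> sg z = -1"
proof -
  assume h: "a1 + of_int k \<le> z" "z < a0 + of_int k"
  have "\<lfloor>z - a1\<rfloor> = k" using h d1 by (intro floor_unique) auto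
  then show "sg z = -1" using h by (simp add: sg_def)
qed

lemma sg_pos: "a0 + of_int k \<le> z \<Longrightarrow> z < a1 + of_int k + 1 \<Longrightarrow> sg z = 1"
proof -
  assume h: "a0 + of_int k \<le> z" "z < a1 + of_int k + 1"
  have "\<lfloor>z - a1\<rfloor> = k" using h d0 by (intro floor_unique) auto
  then show "sg z = 1" using h by (simp add: sg_def)
qed

lemma sum_split_nat: "(\<Sum>i<m+n. f i) = (\<Sum>i<m. f i) + (\<Sum>i<n. f (m + i)) "
  for f :: "nat \<Rightarrow> int"
  by (induction n) (simp_all add: add.assoc)

lemma Exs_zero_if_swap:
  assumes "\<And>i. sg ((F^^s) ((F^^i) x)) = - sg ((F^^i) x)"
  shows "Exs (2 * s) x = 0"
proof -
  have sp: "Exs (2 * s) x = (\<Sum>i<s. sg ((F^^i) x)) + (\<Sum>i<s. sg ((F^^(s+i)) x))"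
    unfolding Exs_def mult_2 by (rule sum_split_nat)
  have "(\<Sum>i<s. sg ((F^^(s+i)) x)) = (\<Sum>i<s. - sg ((F^^i) x))"
  proof (rule sum.cong[OF refl])
    fix i
    have "(F^^(s+i)) x = (F^^s) ((F^^i) x)" by (simp only: funpow_add o_apply)
    then show "sg ((F^^(s+i)) x) = - sg ((F^^i) x)" using assms by simp
  qed
  then show ?thesis using sp by (simp add: sum_negf)
qed

lemma right_const:
  fixes g :: "real \<Rightarrow> real"
  assumes cont: "continuous_on UNIV g"
    and loc: "\<And>x. \<exists>\<delta>>0. \<forall>y. x \<le> y \<and> y \<le> x + \<delta> \<longrightarrow> g y = g x"
    and ab: "a \<le> b"
  shows "g b = g a"
proof -
  define T where "T = {t. a \<le> t \<and> t \<le> b \<and> g t = g a}"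
  have Tc: "closed T"
  proof -
    have e: "T = {a..b} \<inter> {t. g t = g a}" unfolding T_def by auto
    have "closed {t. g t = g a}" by (rule closed_Collect_eq[OF cont continuous_on_const])
    then show ?thesis unfolding e by (intro closed_Int closed_atLeastAtMost)
  qed
  have "a \<in> T" unfolding T_def using ab by simp
  then have Tne: "T \<noteq> {}" by blast
  have Tb: "bdd_above T" unfolding T_def by (rule bdd_aboveI[of _ b]) simp
  define c where "c = Sup T"
  have cT: "c \<in> T" unfolding c_def using closed_contains_Sup[OF Tne Tb Tc] .
  then have c: "a \<le> c" "c \<le> b" "g c = g a" unfolding T_def by auto
  show ?thesis
  proof (cases "c = b")
    case True then show ?thesis using c by simp
  next
    case False
    then have cb: "c < b" using c by simp
    obtain d where d: "d > 0" "\<forall>y. c \<le> y \<and> y \<le> c + d \<longrightarrow> g y = g c" using loc[of c] by blast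
    define y where "y = c + min d (b - c)"
    have y1: "c < y" "y \<le> b" "y \<le> c + d"
      unfolding y_def using d(1) cb by (auto simp: min_def)
    have "c \<le> y \<and> y \<le> c + d" using y1 by linarith
    then have "g y = g c" using d(2) by blast
    then have "y \<in> T" using y1 c unfolding T_def by simp
    then have "y \<le> c" unfolding c_def using Tb by (rule cSup_upper)
    then show ?thesis using y1 by simp
  qed
qed

definition per :: "nat \<Rightarrow> int \<Rightarrow> real \<Rightarrow> bool" where
  "per q P z \<longleftrightarrow> (F^^q) z = z + of_int P"

lemma per_F: "per q P z \<Longrightarrow> per q P (F z)"
  unfolding per_def
proof -
  assume h: "(F^^q) z = z + of_int P"
  have "(F^^q) (F z) = F ((F^^q) z)" by (rule funpow_swap1[symmetric])
  also have "\<dots> = F z + of_int P" using h F_shift by simp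
  finally show "(F^^q) (F z) = F z + of_int P" .
qed

lemma per_Fn: "per q P z \<Longrightarrow> per q P ((F^^k) z)"
  unfolding per_def by (simp add: Fn_swap Fn_shift)

lemma per_shift: "per q P z \<Longrightarrow> per q P (z + of_int k)"
  unfolding per_def by (simp add: Fn_shift)

lemma per_shift_iff: "per q P (z + of_int k) \<longleftrightarrow> per q P z"
  using per_shift[of q P z k] per_shift[of q P "z + of_int k" "-k"] by auto

lemma per_neg: "per q P z \<Longrightarrow> per q P (- z)"
proof -
  assume h: "per q P z"
  have e: "(F^^q) (z - of_int P) = z" using h Fn_shift[of q z "-P"] unfolding per_def by simp
  have "(F^^q) (- (F^^q) (z - of_int P)) = - (z - of_int P)" by (rule Fn_refl)
  then show ?thesis using e unfolding per_def by simp
qed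

lemma per_H: "per q P z \<Longrightarrow> per q P (- F z)"
  using per_F per_neg by blast

lemma per_Fn_rev: "per q P ((F^^k) z) \<Longrightarrow> per q P z"
proof -
  assume "per q P ((F^^k) z)"
  then have "(F^^k) ((F^^q) z) = (F^^k) (z + of_int P)"
    unfolding per_def by (simp add: Fn_swap Fn_shift)
  then show ?thesis unfolding per_def by (rule Fn_inj)
qed

lemma per_closed: "closed {z. per q P z}"
  unfolding per_def by (intro closed_Collect_eq) (auto intro!: continuous_intros Fn_cont)

lemma Fs_neg:
  assumes q: "q = s + s" and v: "per q P v"
  shows "(F^^s) (- v) = - (F^^s) v + of_int P"
proof -
  define x where "x = (F^^s) v - of_int P"
  have "(F^^s) x = (F^^s) ((F^^s) v) - of_int P"
    unfolding x_def using Fn_shift[of s "(F^^s) v" "-P"] by simp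
  also have "(F^^s) ((F^^s) v) = (F^^q) v" unfolding q by (simp add: funpow_add)
  finally have "(F^^s) x = v" using v unfolding per_def by simp
  then have "(F^^s) (- v) = - x" using Fn_refl[of s x] by simp
  then show ?thesis unfolding x_def by simp
qed

lemma Fs_a0:
  assumes q: "q = s + s" and P: "P = 2 * j - 1" and h: "per q P a0"
  shows "(F^^s) a0 = a1 + of_int j"
proof -
  define y where "y = (F^^s) a0"
  have "F y = (F^^s) (F a0)" unfolding y_def by (rule funpow_swap1)
  also have "\<dots> = (F^^s) (- a0 + of_int 1)" using F_a0 by simp
  also have "\<dots> = (F^^s) (- a0) + 1" using Fn_shift[of s "- a0" 1] by simp
  also have "\<dots> = - y + of_int P + 1" using Fs_neg[OF q h] unfolding y_def by simp
  finally have "- F y - y = - F (a1 + of_int j) - (a1 + of_int j)"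
    using kappa_a1[of j] P by simp
  then show ?thesis unfolding y_def by (rule kappa_inj)
qed

lemma Fs_a1:
  assumes q: "q = s + s" and P: "P = 2 * j - 1" and h: "per q P a1"
  shows "(F^^s) a1 = a0 + of_int (j - 1)"
proof -
  define y where "y = (F^^s) a1"
  have "F y = (F^^s) (F a1)" unfolding y_def by (rule funpow_swap1)
  also have "\<dots> = (F^^s) (- a1)" using F_a1 by simp
  also have "\<dots> = - y + of_int P" using Fs_neg[OF q h] unfolding y_def by simp
  finally have "- F y - y = - F (a0 + of_int (j - 1)) - (a0 + of_int (j - 1))"
    using kappa_a0[of "j - 1"] P by simp
  then show ?thesis unfolding y_def by (rule kappa_inj)
qed

lemma per_a1_a0:
  assumes q: "q = s + s" and P: "P = 2 * j - 1" and h: "per q P a1"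
  shows "per q P a0"
proof -
  have "per q P ((F^^s) a1)" using h by (rule per_Fn)
  then have "per q P (a0 + of_int (j - 1))" using Fs_a1[OF q P h] by simp
  then show ?thesis using per_shift_iff by blast
qed

lemma even_all:
  assumes q: "q = s + s" and P: "P = 2 * j - 1" and h: "per q P a0"
  shows "(F^^q) x = x + of_int P"
proof -
  have ya0: "(F^^s) a0 = a1 + of_int j" by (rule Fs_a0[OF q P h])
  have "per q P ((F^^s) a0)" using h by (rule per_Fn)
  then have pa1: "per q P a1" using ya0 per_shift_iff by simp
  have ya1: "(F^^s) a1 = a0 + of_int (j - 1)" by (rule Fs_a1[OF q P pa1])
  have swap: "sg ((F^^s) w) = - sg w" for w
  proof -
    define n where "n = \<lfloor>w - a1\<rfloor>"
    define w' where "w' = w - of_int n"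
    have wc: "a1 \<le> w'" "w' < a1 + 1" unfolding w'_def n_def by linarith+
    have e1: "(F^^s) w = (F^^s) w' + of_int n" using Fn_shift[of s w' n] unfolding w'_def by simp
    have e2: "w = w' + of_int n" unfolding w'_def by simp
    have red: "sg ((F^^s) w') = - sg w'"
    proof (cases "w' < a0")
      case True
      have s1: "sg w' = -1" using sg_neg[of 0 w'] wc True by simp
      have l: "a0 + of_int (j - 1) \<le> (F^^s) w'" using Fn_mono[OF wc(1), of s] ya1 by simp
      have u: "(F^^s) w' < a1 + of_int (j - 1) + 1" using Fn_strict[OF True, of s] ya0 by simp
      show ?thesis using sg_pos[OF l u] s1 by simp
    next
      case False
      have s1: "sg w' = 1" using sg_pos[of 0 w'] wc False by simp
      have l: "a1 + of_int j \<le> (F^^s) w'" using Fn_mono[of a0 w' s] False ya0 by simp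
      have "(F^^s) w' < (F^^s) (a1 + of_int 1)" using Fn_strict[of w' "a1 + of_int 1" s] wc by simp
      also have "\<dots> = a0 + of_int j" using Fn_shift[of s a1 1] ya1 by simp
      finally show ?thesis using sg_neg[OF l] s1 by simp
    qed
    show ?thesis using red e1 e2 sg_shift by simp
  qed
  have Ex0: "Exs q y = 0" for y
    unfolding q using Exs_zero_if_swap[of s y] swap by (simp add: mult_2)
  define g where "g = (\<lambda>x. (F^^q) x - x)"
  have gc: "continuous_on UNIV g" unfolding g_def by (intro continuous_intros Fn_cont)
  have loc: "\<exists>\<delta>>0. \<forall>y. x \<le> y \<and> y \<le> x + \<delta> \<longrightarrow> g y = g x" for x
  proof -
    obtain d where d: "d > 0" "\<forall>y. x \<le> y \<and> y \<le> x + d \<longrightarrow>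
        (F^^q) y - (F^^q) x = L powr (of_int (Exs q x)) * (y - x)" using RA by blast
    have "L powr (of_int (Exs q x)) = 1" using Ex0 L1 by simp
    then show ?thesis using d unfolding g_def by (intro exI[of _ d]) auto
  qed
  have "g x = g a0"
  proof (cases "a0 \<le> x")
    case True then show ?thesis using right_const[OF gc loc] by blast
  next
    case False then show ?thesis using right_const[OF gc loc, of x a0] by simp
  qed
  then show ?thesis using h unfolding g_def per_def by simp
qed



lemma a0_per:
  assumes q: "q = s + s" and P: "P = 2 * j - 1" and ex: "per q P x0"
  shows "per q P a0"
proof (rule ccontr)
  assume na0: "\<not> per q P a0"
  have na1: "\<not> per q P a1" using per_a1_a0[OF q P] na0 by blast
  define Z where "Z = {z. per q P z}"
  have Zc: "closed Z" unfolding Z_def by (rule per_closed)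
  define Zl where "Zl = Z \<inter> {..a0}"
  define Zr where "Zr = Z \<inter> {a0..}"
  have "per q P (x0 + of_int (- \<lceil>x0 - a0\<rceil>))" using ex by (rule per_shift)
  moreover have "x0 + of_int (- \<lceil>x0 - a0\<rceil>) \<le> a0" by simp linarith
  ultimately have Zlne: "Zl \<noteq> {}" unfolding Zl_def Z_def by blast
  have "per q P (x0 + of_int \<lceil>a0 - x0\<rceil>)" using ex by (rule per_shift)
  moreover have "a0 \<le> x0 + of_int \<lceil>a0 - x0\<rceil>" by linarith
  ultimately have Zrne: "Zr \<noteq> {}" unfolding Zr_def Z_def by blast
  have Zlb: "bdd_above Zl" unfolding Zl_def by (rule bdd_aboveI[of _ a0]) simp
  have Zrb: "bdd_below Zr" unfolding Zr_def by (rule bdd_belowI[of _ a0]) simp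
  have Zlc: "closed Zl" unfolding Zl_def using Zc by (intro closed_Int closed_atMost)
  have Zrc: "closed Zr" unfolding Zr_def using Zc by (intro closed_Int closed_atLeast)
  define u where "u = Sup Zl"
  define v where "v = Inf Zr"
  have uZ: "u \<in> Zl" unfolding u_def by (rule closed_contains_Sup[OF Zlne Zlb Zlc])
  have vZ: "v \<in> Zr" unfolding v_def by (rule closed_contains_Inf[OF Zrne Zrb Zrc])
  have pu: "per q P u" and ua: "u \<le> a0" using uZ unfolding Zl_def Z_def by auto
  have pv: "per q P v" and va: "a0 \<le> v" using vZ unfolding Zr_def Z_def by auto
  have ua': "u < a0" using ua pu na0 by (cases "u = a0") auto
  have va': "a0 < v" using va pv na0 by (cases "v = a0") auto
  have up_u: "z \<le> u" if "per q P z" "z \<le> a0" for z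
  proof -
    have "z \<in> Zl" using that unfolding Zl_def Z_def by simp
    then show ?thesis unfolding u_def using Zlb by (rule cSup_upper)
  qed
  have lo_v: "v \<le> z" if "per q P z" "a0 \<le> z" for z
  proof -
    have "z \<in> Zr" using that unfolding Zr_def Z_def by simp
    then show ?thesis unfolding v_def using Zrb by (rule cInf_lower)
  qed
  have zf: "\<not> per q P z" if "u < z" "z < v" for z
  proof
    assume pz: "per q P z"
    show False
    proof (cases "z \<le> a0")
      case True then show False using up_u[OF pz] that by simp
    next
      case False then show False using lo_v[OF pz] that by simp
    qed
  qed
  have HH': "- F (- F x) = x" for x by (rule HH)
  have Hm: "x < y \<Longrightarrow> - F y < - F x" for x y using F_strict by simp
  have Fu0: "F u < 1 - a0" using F_strict[OF ua'] F_a0 by simp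
  have Fv0: "1 - a0 < F v" using F_strict[OF va'] F_a0 by simp
  have p1u: "per q P (- F u + of_int 1)" using per_shift[OF per_H[OF pu]] .
  have p1v: "per q P (- F v + of_int 1)" using per_shift[OF per_H[OF pv]] .
  have v_le: "v \<le> 1 - F u" using lo_v[OF p1u] Fu0 by simp
  have Hu: "v = 1 - F u"
  proof (rule ccontr)
    assume "v \<noteq> 1 - F u"
    then have vl: "v < 1 - F u" using v_le by simp
    have a: "- F v < v - 1" using Fv0 va' by simp
    have b: "v - 1 < - F u" using vl by simp
    have "- F (v - 1) < - F (- F v)" using Hm[OF a] .
    then have c1: "- F (v - 1) < v" using HH' by simp
    have "- F (- F u) < - F (v - 1)" using Hm[OF b] .
    then have c2: "u < - F (v - 1)" using HH' by simp
    have "per q P (v + of_int (-1))" using pv by (rule per_shift)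
    then have "per q P (- F (v - 1))" using per_H by simp
    then show False using zf c1 c2 by blast
  qed
  have u_ge: "1 - F v \<le> u" using up_u[OF p1v] Fv0 by simp
  have Hv: "u = 1 - F v"
  proof (rule ccontr)
    assume "u \<noteq> 1 - F v"
    then have ul: "1 - F v < u" using u_ge by simp
    have a: "- F v < u - 1" using ul by simp
    have b: "u - 1 < - F u" using Hu ua' va' by simp
    have "- F (u - 1) < - F (- F v)" using Hm[OF a] .
    then have c1: "- F (u - 1) < v" using HH' by simp
    have "- F (- F u) < - F (u - 1)" using Hm[OF b] .
    then have c2: "u < - F (u - 1)" using HH' by simp
    have "per q P (u + of_int (-1))" using pu by (rule per_shift)
    then have "per q P (- F (u - 1))" using per_H by simp
    then show False using zf c1 c2 by blast
  qed
  have Fu: "F u = 1 - v" using Hu by simp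
  have Fv: "F v = 1 - u" using Hv by simp
  define X where "X = (F^^s) u - of_int j"
  define Y where "Y = (F^^s) v - of_int j"
  have nu: "(F^^s) (- u) = - (F^^s) u + of_int P" by (rule Fs_neg[OF q pu])
  have nv: "(F^^s) (- v) = - (F^^s) v + of_int P" by (rule Fs_neg[OF q pv])
  have FX: "F X = - Y"
  proof -
    have "F X = F ((F^^s) u + of_int (- j))" unfolding X_def by simp
    also have "\<dots> = F ((F^^s) u) - of_int j" using F_shift[of "(F^^s) u" "- j"] by simp
    also have "F ((F^^s) u) = (F^^s) (F u)" by (rule funpow_swap1)
    also have "\<dots> = (F^^s) (- v + of_int 1)" using Fu by simp
    also have "\<dots> = (F^^s) (- v) + 1" using Fn_shift[of s "- v" 1] by simp
    finally show ?thesis unfolding Y_def using nv P by simp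
  qed
  have FY: "F Y = - X"
  proof -
    have "F Y = F ((F^^s) v + of_int (- j))" unfolding Y_def by simp
    also have "\<dots> = F ((F^^s) v) - of_int j" using F_shift[of "(F^^s) v" "- j"] by simp
    also have "F ((F^^s) v) = (F^^s) (F v)" by (rule funpow_swap1)
    also have "\<dots> = (F^^s) (- u + of_int 1)" using Fv by simp
    also have "\<dots> = (F^^s) (- u) + 1" using Fn_shift[of s "- u" 1] by simp
    finally show ?thesis unfolding X_def using nu P by simp
  qed
  have XY: "X < Y" unfolding X_def Y_def using Fn_strict[of u v s] ua' va' by simp
  have ka1: "- F a1 - a1 = 0" using F_a1 by simp
  have Xa1: "X < a1"
  proof (rule ccontr)
    assume "\<not> X < a1"
    then have "a1 \<le> X" by simp
    then have "- F X - X \<le> - F a1 - a1" using kappa_strict[of a1 X] by (cases "a1 = X") auto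
    then show False using FX XY ka1 by simp
  qed
  have Ya1: "a1 < Y"
  proof (rule ccontr)
    assume "\<not> a1 < Y"
    then have "Y \<le> a1" by simp
    then have "- F a1 - a1 \<le> - F Y - Y" using kappa_strict[of Y a1] by (cases "a1 = Y") auto
    then show False using FY XY ka1 by simp
  qed
  have FsY: "(F^^s) Y = v + of_int (j - 1)"
  proof -
    have "(F^^s) Y = (F^^s) ((F^^s) v) + of_int (- j)" unfolding Y_def
      using Fn_shift[of s "(F^^s) v" "- j"] by simp
    also have "(F^^s) ((F^^s) v) = (F^^q) v" unfolding q by (simp only: funpow_add o_apply)
    finally show ?thesis using pv P unfolding per_def by simp
  qed
  have FsX1: "(F^^s) (X + 1) = u + of_int j"
  proof -
    have "(F^^s) (X + 1) = (F^^s) ((F^^s) u) + of_int (1 - j)" unfolding X_def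
      using Fn_shift[of s "(F^^s) u" "1 - j"] by (simp add: algebra_simps)
    also have "(F^^s) ((F^^s) u) = (F^^q) u" unfolding q by (simp only: funpow_add o_apply)
    finally show ?thesis using pu P unfolding per_def by simp
  qed
  have zfXY: "\<not> per q P w" if "X < w" "w < Y" for w
  proof
    assume pw: "per q P w"
    define w' where "w' = (F^^s) (w + of_int j) - of_int P"
    have p1: "per q P (w + of_int j)" using pw by (rule per_shift)
    have p2: "per q P ((F^^s) (w + of_int j))" using p1 by (rule per_Fn)
    have pw': "per q P w'" unfolding w'_def using per_shift[OF p2, of "- P"] by simp
    have "(F^^s) w' = (F^^s) ((F^^s) (w + of_int j)) - of_int P"
      unfolding w'_def using Fn_shift[of s "(F^^s) (w + of_int j)" "- P"] by simp
    also have "(F^^s) ((F^^s) (w + of_int j)) = (F^^q) (w + of_int j)"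
      unfolding q by (simp only: funpow_add o_apply)
    finally have e: "(F^^s) w' = w + of_int j"
      using per_shift[OF pw, of j] unfolding per_def by simp
    have "(F^^s) u < (F^^s) w'" using e that unfolding X_def by simp
    then have "u < w'" using Fn_strict_iff by blast
    moreover have "(F^^s) w' < (F^^s) v" using e that unfolding Y_def by simp
    then have "w' < v" using Fn_strict_iff by blast
    ultimately show False using zf pw' by blast
  qed
  have swap: "sg ((F^^s) z) = - sg z"
    if pz: "per q P z" and nb0: "\<forall>k. z \<noteq> a0 + of_int k" and nb1: "\<forall>k. z \<noteq> a1 + of_int k" for z
  proof -
    define n where "n = \<lfloor>z - a1\<rfloor>"
    define z' where "z' = z - of_int n"
    have zc: "a1 \<le> z'" "z' < a1 + 1" unfolding z'_def n_def by linarith+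
    have ez: "z = z' + of_int n" unfolding z'_def by simp
    have pz': "per q P z'" using per_shift[OF pz, of "- n"] unfolding z'_def by simp
    have z'a1: "z' \<noteq> a1" using nb1 ez by auto
    have z'a0: "z' \<noteq> a0" using nb0 ez by auto
    have e1: "(F^^s) z = (F^^s) z' + of_int n" using Fn_shift[of s z' n] ez by simp
    have red: "sg ((F^^s) z') = - sg z'"
    proof (cases "z' < a0")
      case True
      have s1: "sg z' = -1" using sg_neg[of 0 z'] zc True by simp
      have zu: "z' \<le> u"
      proof (rule ccontr)
        assume "\<not> z' \<le> u" then show False using zf[of z'] pz' True va' by simp
      qed
      have zY: "Y \<le> z'"
      proof (rule ccontr)
        assume "\<not> Y \<le> z'" then show False using zfXY[of z'] pz' Xa1 zc z'a1 by simp
      qed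
      have l: "a0 + of_int (j - 1) \<le> (F^^s) z'"
        using Fn_mono[OF zY, of s] FsY va' by simp
      have "(F^^s) z' \<le> (F^^s) u" using Fn_mono[OF zu] .
      then have u: "(F^^s) z' < a1 + of_int (j - 1) + 1" using Xa1 unfolding X_def by simp
      show ?thesis using sg_pos[OF l u] s1 by simp
    next
      case False
      then have za: "a0 < z'" using z'a0 by simp
      have s1: "sg z' = 1" using sg_pos[of 0 z'] zc za by simp
      have zv: "v \<le> z'"
      proof (rule ccontr)
        assume "\<not> v \<le> z'" then show False using zf[of z'] pz' za ua' by simp
      qed
      have zX: "z' \<le> X + 1"
      proof (rule ccontr)
        assume nz: "\<not> z' \<le> X + 1"
        have "per q P (z' + of_int (-1))" using pz' by (rule per_shift)
        then show False using zfXY[of "z' - 1"] nz zc Ya1 by simp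
      qed
      have l: "a1 + of_int j \<le> (F^^s) z'"
        using Fn_mono[OF zv, of s] Ya1 unfolding Y_def by simp
      have "(F^^s) z' \<le> (F^^s) (X + 1)" using Fn_mono[OF zX] .
      then have u: "(F^^s) z' < a0 + of_int j" using FsX1 ua' by simp
      show ?thesis using sg_neg[OF l u] s1 by simp
    qed
    show ?thesis using red e1 ez sg_shift by simp
  qed
  have orb: "sg ((F^^s) ((F^^i) u)) = - sg ((F^^i) u)" for i
  proof (rule swap)
    show "per q P ((F^^i) u)" using pu by (rule per_Fn)
    show "\<forall>k. (F^^i) u \<noteq> a0 + of_int k"
    proof (intro allI notI)
      fix k assume "(F^^i) u = a0 + of_int k"
      then have "per q P (a0 + of_int k)" using per_Fn[OF pu, of i] by simp
      then show False using na0 per_shift_iff by blast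
    qed
    show "\<forall>k. (F^^i) u \<noteq> a1 + of_int k"
    proof (intro allI notI)
      fix k assume "(F^^i) u = a1 + of_int k"
      then have "per q P (a1 + of_int k)" using per_Fn[OF pu, of i] by simp
      then show False using na1 per_shift_iff by blast
    qed
  qed
  have E0: "Exs q u = 0" unfolding q using Exs_zero_if_swap[of s u] orb by (simp add: mult_2)
  obtain d where d: "d > 0" "\<forall>y. u \<le> y \<and> y \<le> u + d \<longrightarrow>
      (F^^q) y - (F^^q) u = L powr (of_int (Exs q u)) * (y - u)" using RA by blast
  have L0: "L powr (of_int (Exs q u)) = 1" using E0 L1 by simp
  define y where "y = u + min d ((v - u) / 2)"
  have y1: "u < y" "y < v" "y \<le> u + d" unfolding y_def using d(1) ua' va' by (auto simp: min_def field_simps)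
  have "u \<le> y \<and> y \<le> u + d" using y1 by linarith
  then have "(F^^q) y - (F^^q) u = y - u" using d(2) L0 by simp
  then have "per q P y" using pu unfolding per_def by simp
  then show False using zf y1 by blast
qed

lemma odd_b_aux:
  assumes h: "(F^^k) a0 = a1 + of_int m"
  shows "(F^^(2 * k)) a0 = a0 + of_int (2 * m - 1)"
proof -
  have "(F^^k) (- (F^^k) a0) = - a0" by (rule Fn_refl)
  then have "(F^^k) (- a1 + of_int (- m)) = - a0" using h by simp
  then have e1: "(F^^k) (- a1) = of_int m - a0" using Fn_shift[of k "- a1" "- m"] by simp
  have "F ((F^^k) a1) = (F^^k) (F a1)" by (rule funpow_swap1)
  also have "\<dots> = of_int m - a0" using e1 F_a1 by simp
  also have "\<dots> = F (a0 + of_int (m - 1))" using F_shift[of a0 "m - 1"] F_a0 by simp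
  finally have e2: "(F^^k) a1 = a0 + of_int (m - 1)" by (rule F_inj)
  have "(F^^(2 * k)) a0 = (F^^k) ((F^^k) a0)" by (simp only: mult_2 funpow_add o_apply)
  also have "\<dots> = (F^^k) a1 + of_int m" using h Fn_shift by simp
  finally show ?thesis using e2 by simp
qed


end

lemma trig_facts:
  fixes l \<alpha> \<theta> :: real
  assumes hl: "l > 0" and h\<alpha>: "0 < \<alpha>" and h\<alpha>\<theta>: "\<alpha> < \<theta>" and h\<theta>: "\<theta> < pi / 2"
  shows "iw_Lambda \<alpha> \<theta> > 1"
    and "iw_a1 l \<alpha> \<theta> < iw_a0 l \<theta>"
    and "iw_a0 l \<theta> - iw_a1 l \<alpha> \<theta> = iw_Lambda \<alpha> \<theta> * (1 - (iw_a0 l \<theta> - iw_a1 l \<alpha> \<theta>))"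
proof -
  define S where "S = sin \<theta>"
  define C where "C = cos \<theta>"
  define s where "s = sin \<alpha>"
  define c where "c = cos \<alpha>"
  have S0: "S > 0" unfolding S_def using h\<alpha> h\<alpha>\<theta> h\<theta> by (intro sin_gt_zero) auto
  have C0: "C > 0" unfolding C_def using h\<alpha> h\<alpha>\<theta> h\<theta> by (intro cos_gt_zero_pi) auto
  have s0: "s > 0" unfolding s_def using h\<alpha> h\<alpha>\<theta> h\<theta> by (intro sin_gt_zero) auto
  have c0: "c > 0" unfolding c_def using h\<alpha> h\<alpha>\<theta> h\<theta> by (intro cos_gt_zero_pi) auto
  have tt: "tan \<theta> = S / C" unfolding S_def C_def by (simp add: tan_def)
  have ta: "tan \<alpha> = s / c" unfolding s_def c_def by (simp add: tan_def)
  have sp: "sin (\<theta> + \<alpha>) = S * c + C * s" unfolding S_def C_def s_def c_def by (simp add: sin_add)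
  have sm: "sin (\<theta> - \<alpha>) = S * c - C * s" unfolding S_def C_def s_def c_def by (simp add: sin_diff)
  have smp: "sin (\<theta> - \<alpha>) > 0" using h\<alpha> h\<alpha>\<theta> h\<theta> by (intro sin_gt_zero) auto
  have Cs: "C * s > 0" using C0 s0 by simp
  have Sc: "S * c > 0" using S0 c0 by simp
  have Lam: "iw_Lambda \<alpha> \<theta> = (S * c + C * s) / (S * c - C * s)"
    unfolding iw_Lambda_def sp sm ..
  have D: "S * c - C * s > 0" using smp sm by simp
  show "iw_Lambda \<alpha> \<theta> > 1" unfolding Lam using D Cs by (simp add: less_divide_eq)
  have d: "iw_a0 l \<theta> - iw_a1 l \<alpha> \<theta> = (S * c + C * s) / (2 * (S * c))"
    unfolding iw_a0_def iw_a1_def tt ta using S0 C0 s0 c0 by (simp add: field_simps)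
  show "iw_a1 l \<alpha> \<theta> < iw_a0 l \<theta>"
  proof -
    have "0 < (S * c + C * s) / (2 * (S * c))" using Sc Cs by simp
    then show ?thesis using d by simp
  qed
  have omd: "1 - (iw_a0 l \<theta> - iw_a1 l \<alpha> \<theta>) = (S * c - C * s) / (2 * (S * c))"
    unfolding d using S0 c0 by (simp add: field_simps)
  have "iw_Lambda \<alpha> \<theta> * (1 - (iw_a0 l \<theta> - iw_a1 l \<alpha> \<theta>))
      = (S * c + C * s) / (S * c - C * s) * ((S * c - C * s) / (2 * (S * c)))"
    by (simp only: omd Lam)
  also have "\<dots> = (S * c + C * s) / (2 * (S * c))" using D by simp
  finally show "iw_a0 l \<theta> - iw_a1 l \<alpha> \<theta> = iw_Lambda \<alpha> \<theta> * (1 - (iw_a0 l \<theta> - iw_a1 l \<alpha> \<theta>))"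
    using d by simp
qed

lemma real_frac_eq_int:
  assumes "k > 0" "q > 0" "of_int c / real k = of_int P / real q"
  shows "c * int q = P * int k"
proof -
  have "of_int c * real q = of_int P * real k" using assms by (simp add: field_simps)
  then have "real_of_int (c * int q) = real_of_int (P * int k)" by simp
  then show ?thesis by (simp only: of_int_eq_iff)
qed

theorem proposition3p1:
  fixes l \<alpha> \<theta> :: real and p q :: nat
  assumes hl: "l > 0"
    and h\<alpha>: "0 < \<alpha>" and h\<alpha>\<theta>: "\<alpha> < \<theta>" and h\<theta>: "\<theta> < pi / 2"
    and h\<theta>2: "\<theta> \<ge> arctan (2 * l + tan \<alpha>)"
    and hpq: "(p > 0 \<and> q > 0 \<and> coprime p q) \<or> (p = 0 \<and> q = 1)"
    and hrot: "rot_number (iw_lift l \<alpha> \<theta>) = real p / real q"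
  shows
    "(even q \<longrightarrow>
        (\<forall>x. same_pt ((iw_lift l \<alpha> \<theta> ^^ q) x) x)
      \<and> (\<forall>x. \<forall>k. 0 < k \<and> k < q \<longrightarrow> \<not> same_pt ((iw_lift l \<alpha> \<theta> ^^ k) x) x)
      \<and> (\<exists>k. same_pt ((iw_lift l \<alpha> \<theta> ^^ k) (iw_a0 l \<theta>)) (iw_a1 l \<alpha> \<theta>)))
   \<and> (odd q \<longrightarrow>
        (\<forall>a b. a < b \<and> b \<le> a + 1 \<longrightarrow>
            (\<exists>x\<in>{a..b}. \<not> same_pt ((iw_lift l \<alpha> \<theta> ^^ q) x) x))
      \<and> (\<forall>k. \<not> same_pt ((iw_lift l \<alpha> \<theta> ^^ k) (iw_a0 l \<theta>)) (iw_a1 l \<alpha> \<theta>)))"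
proof -
  define a0 where "a0 = iw_a0 l \<theta>"
  define a1 where "a1 = iw_a1 l \<alpha> \<theta>"
  define Lm where "Lm = iw_Lambda \<alpha> \<theta>"
  define F where "F = iw_lift l \<alpha> \<theta>"
  have T1: "Lm > 1" "a1 < a0" "a0 - a1 = Lm * (1 - (a0 - a1))"
    unfolding Lm_def a0_def a1_def using trig_facts[OF hl h\<alpha> h\<alpha>\<theta> h\<theta>] by auto
  have T2: "a0 < a1 + 1"
  proof (rule ccontr)
    assume "\<not> a0 < a1 + 1"
    then have "1 - (a0 - a1) \<le> 0" by simp
    then have "Lm * (1 - (a0 - a1)) \<le> 0" using T1(1) by (simp add: mult_nonneg_nonpos)
    then show False using T1 by simp
  qed
  interpret I: iwm a0 a1 Lm F
  proof
    show "Lm > 1" "a1 < a0" "a0 < a1 + 1" "a0 - a1 = Lm * (1 - (a0 - a1))" using T1 T2 by auto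
    fix x
    show "F x = of_int \<lfloor>x - a1\<rfloor> + (if x - of_int \<lfloor>x - a1\<rfloor> \<le> a0
        then - a1 + (x - of_int \<lfloor>x - a1\<rfloor> - a1) / Lm
        else 1 - a0 + Lm * (x - of_int \<lfloor>x - a1\<rfloor> - a0))"
      unfolding F_def iw_lift_def a0_def a1_def Lm_def Let_def by simp
  qed
  have q0: "q > 0" using hpq by auto
  have rr: "I.rho = lim (\<lambda>n. (F^^n) 0 / real n)" by (rule I.rho_def)
  have fr: "frac I.rho = real p / real q"
    using hrot unfolding rot_number_def F_def[symmetric] rr by simp
  define P where "P = int p + int q * \<lfloor>I.rho\<rfloor>"
  have rhoP: "I.rho = of_int P / real q"
  proof -
    have "I.rho = real p / real q + of_int \<lfloor>I.rho\<rfloor>" using fr unfolding frac_def by simp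
    then show ?thesis unfolding P_def using q0 by (simp add: field_simps)
  qed
  have part_even: "even q \<longrightarrow>
        (\<forall>x. same_pt ((F ^^ q) x) x)
      \<and> (\<forall>x. \<forall>k. 0 < k \<and> k < q \<longrightarrow> \<not> same_pt ((F ^^ k) x) x)
      \<and> (\<exists>k. same_pt ((F ^^ k) a0) a1)"
  proof
    assume eq: "even q"
    then have cop: "coprime p q" using hpq by auto
    define s where "s = q div 2"
    have qs: "q = s + s" unfolding s_def using even_two_times_div_two[OF eq] by simp
    have oddP: "odd P"
    proof
      assume "even P"
      then have "even (int p)" unfolding P_def using eq by simp
      then have "2 dvd p" by simp
      moreover have "2 dvd q" using eq by simp
      ultimately have "(2::nat) = 1" using coprime_common_divisor_nat[OF cop] by blast
      then show False by simp
    qed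
    define j where "j = (P + 1) div 2"
    have Pj: "P = 2 * j - 1" unfolding j_def using oddP by presburger
    obtain x0 where x0: "(F^^q) x0 = x0 + of_int P" using I.per_exists[OF q0 rhoP] by blast
    have pa0: "I.per q P a0" using I.a0_per[OF qs Pj, of x0] x0 unfolding I.per_def by simp
    have all: "(F^^q) x = x + of_int P" for x by (rule I.even_all[OF qs Pj pa0])
    have c1: "\<forall>x. same_pt ((F ^^ q) x) x" using all unfolding same_pt_def by simp
    have c2: "\<forall>x. \<forall>k. 0 < k \<and> k < q \<longrightarrow> \<not> same_pt ((F ^^ k) x) x"
    proof (intro allI impI notI)
      fix x k assume k: "0 < k \<and> k < q" and sp: "same_pt ((F ^^ k) x) x"
      then obtain c where c: "(F ^^ k) x - x = of_int c" unfolding same_pt_def by (auto elim: Ints_cases)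
      have "I.rho = of_int c / real k" using I.rho_per[of k x c] k c by simp
      then have e: "c * int q = P * int k" using real_frac_eq_int[of k q c P] k q0 rhoP by simp
      have "int q dvd int p * int k"
      proof -
        have "int p * int k = c * int q - int q * (\<lfloor>I.rho\<rfloor> * int k)"
          using e unfolding P_def by (simp add: algebra_simps)
        then show ?thesis by simp
      qed
      moreover have "coprime (int q) (int p)" using cop by (simp add: coprime_commute)
      ultimately have "int q dvd int k" using coprime_dvd_mult_right_iff by blast
      then have "q dvd k" by simp
      then show False using k by (simp add: nat_dvd_not_less)
    qed
    have c3: "\<exists>k. same_pt ((F ^^ k) a0) a1"
      using I.Fs_a0[OF qs Pj pa0] unfolding same_pt_def by (intro exI[of _ s]) simp
    show "(\<forall>x. same_pt ((F ^^ q) x) x)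
      \<and> (\<forall>x. \<forall>k. 0 < k \<and> k < q \<longrightarrow> \<not> same_pt ((F ^^ k) x) x)
      \<and> (\<exists>k. same_pt ((F ^^ k) a0) a1)" using c1 c2 c3 by blast
  qed
  have part_odd: "odd q \<longrightarrow>
        (\<forall>a b. a < b \<and> b \<le> a + 1 \<longrightarrow> (\<exists>x\<in>{a..b}. \<not> same_pt ((F ^^ q) x) x))
      \<and> (\<forall>k. \<not> same_pt ((F ^^ k) a0) a1)"
  proof
    assume oq: "odd q"
    have c1: "\<forall>a b. a < b \<and> b \<le> a + 1 \<longrightarrow> (\<exists>x\<in>{a..b}. \<not> same_pt ((F ^^ q) x) x)"
      using I.odd_a[OF oq] unfolding same_pt_def by blast
    have c2: "\<forall>k. \<not> same_pt ((F ^^ k) a0) a1"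
    proof (intro allI notI)
      fix k assume "same_pt ((F ^^ k) a0) a1"
      then obtain m where m: "(F ^^ k) a0 - a1 = of_int m" unfolding same_pt_def by (auto elim: Ints_cases)
      have h2: "(F^^(2 * k)) a0 = a0 + of_int (2 * m - 1)" using I.odd_b_aux[of k m] m by simp
      show False
      proof (cases "k = 0")
        case True
        then have "of_int (2 * m - 1) = (0::real)" using h2 by simp
        then have "2 * m - 1 = 0" by (simp only: of_int_eq_0_iff)
        then show False by presburger
      next
        case False
        have "I.rho = of_int (2 * m - 1) / real (2 * k)" using I.rho_per[of "2 * k" a0 "2 * m - 1"] h2 False by simp
        then have "(2 * m - 1) * int q = P * int (2 * k)"
          using real_frac_eq_int[of "2 * k" q "2 * m - 1" P] False q0 rhoP by simp
        moreover have "odd ((2 * m - 1) * int q)" using oq by simp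
        moreover have "even (P * int (2 * k))" by simp
        ultimately show False by simp
      qed
    qed
    show "(\<forall>a b. a < b \<and> b \<le> a + 1 \<longrightarrow> (\<exists>x\<in>{a..b}. \<not> same_pt ((F ^^ q) x) x))
      \<and> (\<forall>k. \<not> same_pt ((F ^^ k) a0) a1)" using c1 c2 by blast
  qed
  show ?thesis using part_even part_odd unfolding F_def a0_def a1_def by blast
qed

end
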